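(* Let $\mathbb K$ be a field of characteristic $0$ and $N\ge1$. The image of the weight system $W^{\mathrm{St}}_{\mathfrak{gl}_N}:\mathcal A(\downarrow\downarrow)_{\mathbb K}\to\mathrm{End}(\mathbb K^N)^{\otimes2}$ associated with $(\mathfrak{gl}_N(\mathbb K),B_0,\mathrm{St})$ is a commutative subalgebra.
   Context: Jacobi diagrams on an oriented compact $1$-manifold $X$ span $\mathcal A(X)$ modulo AS, IHX, STU; $\mathcal A(X)_{\mathbb K}=\mathcal A(X)\otimes\mathbb K$; $\downarrow\downarrow$ is two downward oriented strands, and $\mathcal A(\downarrow\downarrow)$ is an algebra under stacking. For a metrized Lie algebra $(\mathfrak g,\langle\cdot,\cdot\rangle)$ over $\mathbb K$, the universal weight system $W_{\mathfrak g}:\mathcal A(\downarrow^{\otimes n})_{\mathbb K}\to U(\mathfrak g)^{\otimes n}$ is the algebra homomorphism obtained by putting on each edge the Casimir tensor $\Omega=\sum_av_a\otimes v^a$ (basis and dual basis w.r.t. the form), at each trivalent vertex $-\mathbf t$ where $\mathbf t\in\mathfrak g^{\otimes3}$ corresponds to $(x,y,z)\mapsto\langle[x,y],z\rangle$ (factors in cyclic order), contracting along edges and multiplying in $U(\mathfrak g)$ along each strand in its orientation order; for a representation $\rho:\mathfrak g\to\mathrm{End}(V)$, $W^\rho_{\mathfrak g}=U(\rho)^{\otimes n}\circ W_{\mathfrak g}$. $B_0(x,y)=\mathrm{tr}(xy)$ is the trace form and $\mathrm{St}$ the standard representation on $\mathbb K^N$. *)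

theory Defs
  imports "HOL-Analysis.Analysis" "HOL-Library.FuncSet"
begin

text \<open>
  Encoding of Jacobi diagrams on two downward strands.
  A diagram is a tuple (m, T, S1, S2, Ed):
  the flags (edge ends) are 0,...,m-1; T lists the trivalent vertices, each
  given by the triple of its flags in their cyclic order; S1, S2 list the flags
  (univalent vertices) on strand 1 and strand 2 in orientation order; Ed lists
  the edges as pairs of flags.
\<close>

type_synonym jdiag = "nat \<times> (nat \<times> nat \<times> nat) list \<times> nat list \<times> nat list \<times> (nat \<times> nat) list"

definition vflags :: "(nat \<times> nat \<times> nat) list \<Rightarrow> nat list" where
  "vflags T = concat (map (\<lambda>(a, b, c). [a, b, c]) T)"

definition eflags :: "(nat \<times> nat) list \<Rightarrow> nat list" where
  "eflags Ed = concat (map (\<lambda>(f, g). [f, g]) Ed)"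

fun wf_jdiag :: "jdiag \<Rightarrow> bool" where
  "wf_jdiag (m, T, S1, S2, Ed) \<longleftrightarrow>
     distinct (vflags T @ S1 @ S2) \<and> set (vflags T @ S1 @ S2) = {0..<m} \<and>
     distinct (eflags Ed) \<and> set (eflags Ed) = {0..<m}"

text \<open>Matrix units E_ij of gl_N acting on K^N (standard representation), N = CARD('n).\<close>
definition Eu :: "'n::finite \<times> 'n \<Rightarrow> 'k::field ^ 'n ^ 'n" where
  "Eu p = (\<chi> r s. if (r, s) = p then 1 else 0)"

definition mprod :: "('k::field ^ 'n::finite ^ 'n) list \<Rightarrow> 'k ^ 'n ^ 'n" where
  "mprod xs = foldr (\<lambda>A B. A ** B) xs (mat 1)"

definition mtr :: "'k::field ^ 'n::finite ^ 'n \<Rightarrow> 'k" where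
  "mtr A = (\<Sum>i\<in>UNIV. A $ i $ i)"

definition lbr :: "'k::field ^ 'n::finite ^ 'n \<Rightarrow> 'k ^ 'n ^ 'n \<Rightarrow> 'k ^ 'n ^ 'n" where
  "lbr A B = A ** B - B ** A"

text \<open>End(K^N) \<otimes> End(K^N) identified (as an algebra) with End(K^N \<otimes> K^N):
  A \<otimes> B corresponds to the Kronecker product.\<close>
definition kron :: "'k::field ^ 'n::finite ^ 'n \<Rightarrow> 'k ^ 'n ^ 'n \<Rightarrow> 'k ^ ('n \<times> 'n) ^ ('n \<times> 'n)" where
  "kron A B = (\<chi> p q. A $ fst p $ fst q * B $ snd p $ snd q)"

text \<open>The weight system W^St_{gl_N} for the trace form B_0 on a diagram:
  the Casimir is \<Sum>_{ij} E_ij \<otimes> E_ji (dual basis of E_ij w.r.t. tr(xy) is E_ji),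
  so each edge carries a label (i,j) on one end and (j,i) on the other;
  each trivalent vertex with flags (a,b,c) in cyclic order contributes -tr([x_a,x_b]x_c);
  each strand contributes the ordered product of the matrices on it.\<close>
fun Wst :: "jdiag \<Rightarrow> 'k::field ^ ('n::finite \<times> 'n) ^ ('n \<times> 'n)" where
  "Wst (m, T, S1, S2, Ed) =
     (\<chi> p q. \<Sum>l\<in>PiE {0..<m} (\<lambda>_. (UNIV :: ('n \<times> 'n) set)).
        (\<Prod>(f, g)\<leftarrow>Ed. if l g = prod.swap (l f) then 1 else 0)
      * (\<Prod>(a, b, c)\<leftarrow>T. - mtr (lbr (Eu (l a)) (Eu (l b)) ** Eu (l c)))
      * kron (mprod (map (\<lambda>x. Eu (l x)) S1)) (mprod (map (\<lambda>x. Eu (l x)) S2)) $ p $ q)"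

text \<open>The image of W^St_{gl_N} on A(\<down>\<down>)_K: the K-linear span of the values on diagrams.\<close>
definition Wimage :: "('k::field ^ ('n::finite \<times> 'n) ^ ('n \<times> 'n)) set" where
  "Wimage = {X. \<exists>A c. finite A \<and> (\<forall>D\<in>A. wf_jdiag D) \<and>
                 X = (\<chi> p q. \<Sum>D\<in>A. c D * (Wst D :: 'k ^ ('n \<times> 'n) ^ ('n \<times> 'n)) $ p $ q)}"

end

theory Submission
  imports Defs
begin


lemma Eu_nth[simp]: "Eu p $ r $ s = (if (r, s) = p then 1 else 0)"
  by (simp add: Eu_def)

fun chain :: "('n \<times> 'n) list \<Rightarrow> 'n \<Rightarrow> 'n \<Rightarrow> bool" where
  "chain [] i j = (i = j)"
| "chain (x # xs) i j = (fst x = i \<and> chain xs (snd x) j)"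

lemma mprod_Cons: "mprod (A # xs) = A ** mprod xs"
  by (simp add: mprod_def)

lemma mprod_Nil: "mprod [] = mat 1"
  by (simp add: mprod_def)

lemma mprod_append: "mprod (xs @ ys) = mprod xs ** mprod ys"
  by (induction xs) (simp_all add: mprod_def matrix_mul_assoc matrix_mul_lid)

lemma if10_mult: "(if P then 1 else 0) * y = (if P then y else (0::'a::semiring_1))"
  by simp

lemma Eu_mul_nth: "(Eu x ** (M::'k::field^'n::finite^'n)) $ i $ j = (if fst x = i then M $ snd x $ j else 0)"
proof -
  obtain a b where x: "x = (a, b)" by (cases x)
  show ?thesis
    by (cases "i = a") (simp_all add: matrix_matrix_mult_def x if10_mult)
qed

lemma mprod_Eu: "mprod (map Eu xs) $ i $ j = (if chain xs i j then (1::'k::field) else 0)"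
proof (induction xs arbitrary: i)
  case Nil
  then show ?case by (simp add: mprod_Nil mat_def)
next
  case (Cons x xs)
  then show ?case by (simp add: mprod_Cons Eu_mul_nth)
qed

lemma mprod_Eu': "mprod (map (\<lambda>x. Eu (l x)) S) $ i $ j = (if chain (map l S) i j then (1::'k::field) else 0)"
  using mprod_Eu[of "map l S" i j] by (simp add: o_def)

lemma Eu_Eu: "Eu x ** Eu y = (if snd x = fst y then Eu (fst x, snd y) else (0::'k::field^'n::finite^'n))"
  by (cases x; cases y; rule vec_eq_iff[THEN iffD2], intro allI, rule vec_eq_iff[THEN iffD2]) (auto simp: Eu_mul_nth)

lemma mtr_Eu: "mtr (Eu x :: 'k::field^'n::finite^'n) = (if fst x = snd x then 1 else 0)"
proof (cases x)
  case (Pair a b)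
  show ?thesis
  proof (cases "a = b")
    case True then show ?thesis by (simp add: mtr_def Pair)
  next
    case False
    then have "\<And>i. (if (i, i) = (a, b) then (1::'k) else 0) = 0" by auto
    then show ?thesis by (simp add: mtr_def Pair False)
  qed
qed

lemma mtr_diff: "mtr (A - B) = mtr A - mtr B"
  by (simp add: mtr_def sum_subtractf)

lemma matrix_sub_rdistrib: "(A - B) ** C = A ** C - B ** (C::'k::field^'n::finite^'n)"
  by (simp add: matrix_matrix_mult_def vec_eq_iff left_diff_distrib sum_subtractf)

lemma mtr_zero: "mtr (0::'k::field^'n::finite^'n) = 0"
  by (simp add: mtr_def)

lemma zero_mmul: "(0::'k::field^'n::finite^'n) ** A = 0"
  by (simp add: matrix_matrix_mult_def vec_eq_iff)

lemma mtr3: "mtr (Eu x ** Eu y ** Eu z :: 'k::field^'n::finite^'n) =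
   (if snd x = fst y \<and> snd y = fst z \<and> snd z = fst x then 1 else 0)"
proof (cases "snd x = fst y")
  case True
  then show ?thesis
    by (cases "snd y = fst z") (simp_all add: Eu_Eu mtr_Eu zero_mmul mtr_zero)
next
  case False
  then show ?thesis by (simp add: Eu_Eu zero_mmul mtr_zero)
qed

lemma mtr_formula:
  "mtr (lbr (Eu x) (Eu y) ** Eu z :: 'k::field^'n::finite^'n) =
    (if snd x = fst y \<and> snd y = fst z \<and> snd z = fst x then 1 else 0)
  - (if snd y = fst x \<and> snd x = fst z \<and> snd z = fst y then 1 else 0)"
proof -
  have "lbr (Eu x) (Eu y) ** Eu z = (Eu x ** Eu y) ** Eu z - (Eu y ** Eu x) ** (Eu z :: 'k^'n^'n)"
    by (simp add: lbr_def matrix_sub_rdistrib)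
  then show ?thesis by (simp only: mtr_diff mtr3)
qed

definition ch :: "'n \<Rightarrow> 'n \<times> 'n \<Rightarrow> int" where
  "ch k x = (if fst x = k then 1 else 0) - (if snd x = k then 1 else 0)"

lemma chain_ch: "chain xs i j \<Longrightarrow> sum_list (map (ch k) xs) = ch k (i, j)"
  by (induction xs arbitrary: i) (auto simp: ch_def)

lemma tri_ch:
  assumes "mtr (lbr (Eu x) (Eu y) ** Eu z :: 'k::field^'n::finite^'n) \<noteq> 0"
  shows "ch k x + ch k y + ch k z = 0"
  using assms unfolding mtr_formula by (auto simp: ch_def split: if_splits)

lemma sum_list_eflags: "sum_list (map h (eflags Ed)) = sum_list (map (\<lambda>(f, g). h f + h g) Ed)"
  by (induction Ed) (auto simp: eflags_def)

lemma sum_list_vflags: "sum_list (map (h::nat \<Rightarrow> 'a::comm_monoid_add) (vflags T)) = sum_list (map (\<lambda>(a, b, c). h a + h b + h c) T)"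
  by (induction T) (auto simp: vflags_def add.assoc)

lemma sum_list_zero_each: "(\<And>x. x \<in> set xs \<Longrightarrow> f x = 0) \<Longrightarrow> sum_list (map f xs) = (0::int)"
  by (induction xs) auto

lemma prod_list_nz: "prod_list (map f xs) \<noteq> (0::'a::{semiring_no_zero_divisors,comm_semiring_1}) \<Longrightarrow> x \<in> set xs \<Longrightarrow> f x \<noteq> 0"
  by (induction xs) auto

lemma Wst_nth: "Wst (m, T, S1, S2, Ed) $ p $ q =
  (\<Sum>l\<in>PiE {0..<m} (\<lambda>_. UNIV).
        (\<Prod>(f, g)\<leftarrow>Ed. if l g = prod.swap (l f) then 1 else 0)
      * (\<Prod>(a, b, c)\<leftarrow>T. - mtr (lbr (Eu (l a)) (Eu (l b)) ** Eu (l c)))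
      * (mprod (map (\<lambda>x. Eu (l x)) S1) $ fst p $ fst q * mprod (map (\<lambda>x. Eu (l x)) S2) $ snd p $ snd q))"
  by (simp add: kron_def)

lemma Wst_support:
  assumes wf: "wf_jdiag (m, T, S1, S2, Ed)"
    and nz: "(Wst (m, T, S1, S2, Ed) :: 'k::field^('n::finite \<times> 'n)^('n \<times> 'n)) $ p $ q \<noteq> 0"
  shows "q = p \<or> q = prod.swap p"
proof -
  from nz obtain l where l: "l \<in> PiE {0..<m} (\<lambda>_. UNIV)" and
    tnz: "(\<Prod>(f, g)\<leftarrow>Ed. if l g = prod.swap (l f) then 1 else 0)
      * (\<Prod>(a, b, c)\<leftarrow>T. - mtr (lbr (Eu (l a)) (Eu (l b)) ** Eu (l c)))
      * (mprod (map (\<lambda>x. Eu (l x)) S1) $ fst p $ fst q * mprod (map (\<lambda>x. Eu (l x)) S2) $ snd p $ snd q) \<noteq> (0::'k)"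
    unfolding Wst_nth by (meson sum.not_neutral_contains_not_neutral)
  from tnz have e: "(\<Prod>(f, g)\<leftarrow>Ed. if l g = prod.swap (l f) then 1 else 0) \<noteq> (0::'k)"
    and v: "(\<Prod>(a, b, c)\<leftarrow>T. - mtr (lbr (Eu (l a)) (Eu (l b)) ** Eu (l c))) \<noteq> (0::'k)"
    and s1: "mprod (map (\<lambda>x. Eu (l x)) S1) $ fst p $ fst q \<noteq> (0::'k)"
    and s2: "mprod (map (\<lambda>x. Eu (l x)) S2) $ snd p $ snd q \<noteq> (0::'k)"
    by auto
  have E: "l g = prod.swap (l f)" if "(f, g) \<in> set Ed" for f g
    using prod_list_nz[OF e that] by (auto split: if_splits)
  have V: "mtr (lbr (Eu (l a)) (Eu (l b)) ** Eu (l c) :: 'k^'n^'n) \<noteq> 0" if "(a, b, c) \<in> set T" for a b c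
    using prod_list_nz[OF v that] by auto
  have c1: "chain (map l S1) (fst p) (fst q)" using s1 unfolding mprod_Eu' by (auto split: if_splits)
  have c2: "chain (map l S2) (snd p) (snd q)" using s2 unfolding mprod_Eu' by (auto split: if_splits)
  have key: "ch k (fst p, fst q) + ch k (snd p, snd q) = 0" for k
  proof -
    define h where "h = (\<lambda>x. ch k (l x))"
    have "sum_list (map h (eflags Ed)) = 0"
      unfolding sum_list_eflags
      by (rule sum_list_zero_each) (auto simp: h_def E ch_def)
    moreover have "sum_list (map h (vflags T)) = 0"
      unfolding sum_list_vflags
      by (rule sum_list_zero_each) (auto simp: h_def dest!: V tri_ch[where k=k])
    moreover have "sum_list (map h S1) = ch k (fst p, fst q)"
      using chain_ch[OF c1, of k] by (simp add: h_def o_def)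
    moreover have "sum_list (map h S2) = ch k (snd p, snd q)"
      using chain_ch[OF c2, of k] by (simp add: h_def o_def)
    moreover have "sum_list (map h (eflags Ed)) = sum_list (map h (vflags T @ S1 @ S2))"
      using wf by (simp only: wf_jdiag.simps sum_list_distinct_conv_sum_set)
    ultimately show ?thesis by simp
  qed
  obtain p1 p2 q1 q2 where pq: "p = (p1, p2)" "q = (q1, q2)" by (cases p, cases q)
  have k: "\<And>k. ch k (p1, q1) + ch k (p2, q2) = 0" using key pq by simp
  show ?thesis
    using k[of p1] k[of p2] k[of q1] k[of q2] unfolding pq
    by (auto simp: ch_def split: if_splits)
qed

lemma chain_map: "inj \<sigma> \<Longrightarrow> chain (map (map_prod \<sigma> \<sigma>) xs) (\<sigma> i) (\<sigma> j) = chain xs i j"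
  by (induction xs arbitrary: i) (auto simp: inj_eq)

lemma eflags_mem: "(f, g) \<in> set Ed \<Longrightarrow> f \<in> set (eflags Ed) \<and> g \<in> set (eflags Ed)"
  by (auto simp: eflags_def)

lemma vflags_mem: "(a, b, c) \<in> set T \<Longrightarrow> a \<in> set (vflags T) \<and> b \<in> set (vflags T) \<and> c \<in> set (vflags T)"
  by (auto simp: vflags_def)

lemma bij_restrict_comp:
  assumes "bij (\<tau>::'a \<Rightarrow> 'a)"
  shows "bij_betw (\<lambda>l. restrict (\<tau> \<circ> l) D) (PiE D (\<lambda>_. UNIV)) (PiE D (\<lambda>_. UNIV))"
proof (rule bij_betw_byWitness[where f'="\<lambda>l. restrict (inv \<tau> \<circ> l) D"])
  have i1: "inv \<tau> (\<tau> x) = x" for x using assms by (simp add: bij_is_inj)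
  have i2: "\<tau> (inv \<tau> x) = x" for x using assms by (simp add: bij_is_surj surj_f_inv_f)
  show "\<forall>a\<in>D \<rightarrow>\<^sub>E UNIV. restrict (inv \<tau> \<circ> restrict (\<tau> \<circ> a) D) D = a"
    by (auto simp: fun_eq_iff i1 PiE_def extensional_def)
  show "\<forall>a\<in>D \<rightarrow>\<^sub>E UNIV. restrict (\<tau> \<circ> restrict (inv \<tau> \<circ> a) D) D = a"
    by (auto simp: fun_eq_iff i2 PiE_def extensional_def)
qed auto

lemma Wst_perm:
  assumes wf: "wf_jdiag (m, T, S1, S2, Ed)" and bs: "bij (\<sigma> :: 'n::finite \<Rightarrow> 'n)"
  shows "(Wst (m, T, S1, S2, Ed) :: 'k::field^('n \<times> 'n)^('n \<times> 'n)) $ map_prod \<sigma> \<sigma> p $ map_prod \<sigma> \<sigma> q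
       = Wst (m, T, S1, S2, Ed) $ p $ q"
proof -
  define \<tau> where "\<tau> = map_prod \<sigma> \<sigma>"
  have injs: "inj \<sigma>" using bs by (simp add: bij_is_inj)
  have bt: "bij \<tau>" unfolding \<tau>_def using bij_betw_map_prod[OF bs bs] by simp
  define G where "G = (\<lambda>(l::nat \<Rightarrow> 'n \<times> 'n) (p::'n \<times> 'n) (q::'n \<times> 'n).
        (\<Prod>(f, g)\<leftarrow>Ed. if l g = prod.swap (l f) then 1 else 0)
      * (\<Prod>(a, b, c)\<leftarrow>T. - mtr (lbr (Eu (l a)) (Eu (l b)) ** Eu (l c)))
      * (mprod (map (\<lambda>x. Eu (l x)) S1) $ fst p $ fst q * mprod (map (\<lambda>x. Eu (l x)) S2) $ snd p $ snd q :: 'k))"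
  define h where "h = (\<lambda>l. restrict (\<tau> \<circ> l) {0..<m})"
  have hb: "bij_betw h (PiE {0..<m} (\<lambda>_. UNIV)) (PiE {0..<m} (\<lambda>_. UNIV))"
    unfolding h_def by (rule bij_restrict_comp[of \<tau>]) (rule bt)
  have hx: "h l x = \<tau> (l x)" if "x < m" for l x using that by (simp add: h_def)
  from wf have fl: "set (eflags Ed) = {0..<m}" "set (vflags T) \<subseteq> {0..<m}" "set S1 \<subseteq> {0..<m}" "set S2 \<subseteq> {0..<m}"
    by auto
  have trm: "G (h l) (\<tau> p) (\<tau> q) = G l p q" for l
  proof -
    have 1: "(\<Prod>(f, g)\<leftarrow>Ed. if h l g = prod.swap (h l f) then 1 else 0)
          = (\<Prod>(f, g)\<leftarrow>Ed. if l g = prod.swap (l f) then 1 else (0::'k))"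
    proof (rule arg_cong[where f=prod_list], rule map_cong[OF refl], clarify)
      fix f g assume "(f, g) \<in> set Ed"
      then have "f < m" "g < m" using eflags_mem fl(1) by fastforce+
      then show "(if h l g = prod.swap (h l f) then 1 else 0) = (if l g = prod.swap (l f) then 1 else (0::'k))"
        using injs by (auto simp: hx \<tau>_def inj_eq prod.swap_def map_prod_def split: prod.splits)
    qed
    have 2: "(\<Prod>(a, b, c)\<leftarrow>T. - mtr (lbr (Eu (h l a)) (Eu (h l b)) ** Eu (h l c)))
          = (\<Prod>(a, b, c)\<leftarrow>T. - mtr (lbr (Eu (l a)) (Eu (l b)) ** Eu (l c) :: 'k^'n^'n))"
    proof (rule arg_cong[where f=prod_list], rule map_cong[OF refl], clarify)
      fix a b c assume "(a, b, c) \<in> set T"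
      then have "a < m" "b < m" "c < m" using vflags_mem fl(2) by fastforce+
      then show "- mtr (lbr (Eu (h l a)) (Eu (h l b)) ** Eu (h l c)) = - mtr (lbr (Eu (l a)) (Eu (l b)) ** Eu (l c) :: 'k^'n^'n)"
        using injs by (simp add: hx \<tau>_def mtr_formula inj_eq map_prod_def split_beta)
    qed
    have 3: "mprod (map (\<lambda>x. Eu (h l x)) S) $ \<sigma> i $ \<sigma> j = mprod (map (\<lambda>x. Eu (l x)) S) $ i $ j"
      if "set S \<subseteq> {0..<m}" for S i j
    proof -
      have e: "map (h l) S = map (map_prod \<sigma> \<sigma>) (map l S)" using that
        by (auto simp: hx \<tau>_def)
      show ?thesis by (simp only: mprod_Eu' e chain_map[OF injs])
    qed
    show ?thesis unfolding G_def 1 2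
      by (simp only: \<tau>_def fst_map_prod snd_map_prod 3[OF fl(3)] 3[OF fl(4)])
  qed
  have "Wst (m, T, S1, S2, Ed) $ \<tau> p $ \<tau> q = (\<Sum>l\<in>PiE {0..<m} (\<lambda>_. UNIV). G l (\<tau> p) (\<tau> q))"
    unfolding Wst_nth G_def ..
  also have "\<dots> = (\<Sum>l\<in>PiE {0..<m} (\<lambda>_. UNIV). G (h l) (\<tau> p) (\<tau> q))"
    using sum.reindex_bij_betw[OF hb, of "\<lambda>l. G l (\<tau> p) (\<tau> q)"] by simp
  also have "\<dots> = (\<Sum>l\<in>PiE {0..<m} (\<lambda>_. UNIV). G l p q)"
    using trm by simp
  also have "\<dots> = Wst (m, T, S1, S2, Ed) $ p $ q"
    unfolding Wst_nth G_def ..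
  finally show ?thesis unfolding \<tau>_def .
qed



definition smul :: "'k::field \<Rightarrow> 'k ^ 'm ^ 'n \<Rightarrow> 'k ^ 'm ^ 'n" where
  "smul c X = (\<chi> p q. c * X $ p $ q)"

lemma smul_nth[simp]: "smul c X $ p $ q = c * X $ p $ q"
  by (simp add: smul_def)

lemma smul_mmul: "smul a X ** smul b Y = smul (a * b) (X ** (Y :: 'k::field^'n::finite^'n))"
  by (simp add: vec_eq_iff matrix_matrix_mult_def sum_distrib_left mult_ac)

lemma mmul_rzero: "(A::'k::field^'n::finite^'n) ** 0 = 0"
  by (simp add: matrix_matrix_mult_def vec_eq_iff)

lemma matrix_add_rdistrib: "(A + B) ** C = A ** C + B ** (C::'k::field^'n::finite^'n)"
  by (simp add: matrix_matrix_mult_def vec_eq_iff distrib_right sum.distrib)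

lemma sum_mmul_left: "sum f A ** (B::'k::field^'n::finite^'n) = sum (\<lambda>x. f x ** B) A"
proof (cases "finite A")
  case True then show ?thesis
    by (induction A rule: finite_induct) (simp_all add: zero_mmul matrix_add_rdistrib)
qed (simp add: zero_mmul)

lemma sum_mmul_right: "(B::'k::field^'n::finite^'n) ** sum f A = sum (\<lambda>x. B ** f x) A"
proof (cases "finite A")
  case True then show ?thesis
    by (induction A rule: finite_induct) (simp_all add: mmul_rzero matrix_add_ldistrib)
qed (simp add: mmul_rzero)

lemma kron_mmul: "kron A B ** kron C D = kron (A ** C) (B ** (D::'k::field^'n::finite^'n))"
proof -
  have "(kron A B ** kron C D) $ p $ q = kron (A ** C) (B ** D) $ p $ q" for p q
  proof -
    have "(kron A B ** kron C D) $ p $ q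
        = (\<Sum>r\<in>UNIV \<times> UNIV. A $ fst p $ fst r * B $ snd p $ snd r * (C $ fst r $ fst q * D $ snd r $ snd q))"
      by (simp add: matrix_matrix_mult_def kron_def)
    also have "\<dots> = (\<Sum>r1\<in>UNIV. \<Sum>r2\<in>UNIV. (A $ fst p $ r1 * C $ r1 $ fst q) * (B $ snd p $ r2 * D $ r2 $ snd q))"
      by (subst sum.cartesian_product) (simp add: split_beta mult_ac)
    also have "\<dots> = kron (A ** C) (B ** D) $ p $ q"
      by (simp add: kron_def matrix_matrix_mult_def sum_product)
    finally show ?thesis .
  qed
  then show ?thesis by (simp add: vec_eq_iff)
qed

lemma Wst_sum: "Wst (m, T, S1, S2, Ed) = (\<Sum>l\<in>PiE {0..<m} (\<lambda>_. UNIV).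
     smul ((\<Prod>(f, g)\<leftarrow>Ed. if l g = prod.swap (l f) then 1 else 0)
      * (\<Prod>(a, b, c)\<leftarrow>T. - mtr (lbr (Eu (l a)) (Eu (l b)) ** Eu (l c))))
      (kron (mprod (map (\<lambda>x. Eu (l x)) S1)) (mprod (map (\<lambda>x. Eu (l x)) S2))) :: 'k::field^('n::finite\<times>'n)^('n\<times>'n))"
  by (simp add: vec_eq_iff)



fun stk :: "jdiag \<Rightarrow> jdiag \<Rightarrow> jdiag" where
  "stk (m1, T1, S11, S12, E1) (m2, T2, S21, S22, E2) =
    (m1 + m2, T1 @ map (\<lambda>(a, b, c). (a + m1, b + m1, c + m1)) T2,
     S11 @ map (\<lambda>x. x + m1) S21, S12 @ map (\<lambda>x. x + m1) S22,
     E1 @ map (\<lambda>(f, g). (f + m1, g + m1)) E2)"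

lemma vflags_stk: "vflags (T1 @ map (\<lambda>(a, b, c). (a + k, b + k, c + k)) T2) = vflags T1 @ map (\<lambda>x. x + k) (vflags T2)"
  by (induction T2) (auto simp: vflags_def)

lemma eflags_stk: "eflags (E1 @ map (\<lambda>(f, g). (f + k, g + k)) E2) = eflags E1 @ map (\<lambda>x. x + k) (eflags E2)"
  by (induction E2) (auto simp: eflags_def)

lemma shift_image: "(\<lambda>x. x + k) ` {0..<m} = {k..<k + (m::nat)}"
proof -
  have "(\<lambda>x. x + k) ` {0..<m} = (\<lambda>x. k + x) ` {0..<m}" by (simp add: add.commute)
  then show ?thesis by (simp add: image_add_atLeastLessThan add.commute)
qed

lemma union_shift: "{0..<k} \<union> {k..<k + (m::nat)} = {0..<k + m}"
  by auto

lemma wf_stk: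
  assumes "wf_jdiag (m1, T1, S11, S12, E1)" "wf_jdiag (m2, T2, S21, S22, E2)"
  shows "wf_jdiag (stk (m1, T1, S11, S12, E1) (m2, T2, S21, S22, E2))"
proof -
  let ?s = "\<lambda>x. x + m1"
  have inj: "inj_on ?s A" for A by (simp add: inj_on_def)
  from assms have
    d1: "distinct (vflags T1 @ S11 @ S12)" and s1: "set (vflags T1 @ S11 @ S12) = {0..<m1}"
    and d2: "distinct (vflags T2 @ S21 @ S22)" and s2: "set (vflags T2 @ S21 @ S22) = {0..<m2}"
    and de1: "distinct (eflags E1)" and se1: "set (eflags E1) = {0..<m1}"
    and de2: "distinct (eflags E2)" and se2: "set (eflags E2) = {0..<m2}"
    by auto
  have d2': "distinct (map ?s (vflags T2 @ S21 @ S22))" unfolding distinct_map using d2 inj by blast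
  have s2': "set (map ?s (vflags T2 @ S21 @ S22)) = {m1..<m1 + m2}"
    using s2 by (simp only: set_map shift_image)
  have de2': "distinct (map ?s (eflags E2))" unfolding distinct_map using de2 inj by blast
  have se2': "set (map ?s (eflags E2)) = {m1..<m1 + m2}"
    using se2 by (simp only: set_map shift_image)
  have A: "distinct (vflags T1 @ map ?s (vflags T2) @ S11 @ map ?s S21 @ S12 @ map ?s S22)"
    using d1 s1 d2' s2' by (auto simp: distinct_append)
  have B: "set (vflags T1 @ map ?s (vflags T2) @ S11 @ map ?s S21 @ S12 @ map ?s S22) = {0..<m1 + m2}"
  proof -
    have "set (vflags T1 @ map ?s (vflags T2) @ S11 @ map ?s S21 @ S12 @ map ?s S22)
        = set (vflags T1 @ S11 @ S12) \<union> set (map ?s (vflags T2 @ S21 @ S22))" by auto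
    then show ?thesis using s1 s2' union_shift by simp
  qed
  have Cc: "distinct (eflags E1 @ map ?s (eflags E2))"
    using de1 se1 de2' se2' by (auto simp: distinct_append)
  have D: "set (eflags E1 @ map ?s (eflags E2)) = {0..<m1 + m2}"
    using se1 se2' union_shift by (simp only: set_append)
  show ?thesis using A B Cc D by (simp add: vflags_stk eflags_stk)
qed

definition Gterm :: "(nat \<times> nat \<times> nat) list \<Rightarrow> nat list \<Rightarrow> nat list \<Rightarrow> (nat \<times> nat) list
    \<Rightarrow> (nat \<Rightarrow> 'n \<times> 'n) \<Rightarrow> 'k::field^('n::finite\<times>'n)^('n\<times>'n)" where
  "Gterm T S1 S2 Ed l = smul ((\<Prod>(f, g)\<leftarrow>Ed. if l g = prod.swap (l f) then 1 else 0)
      * (\<Prod>(a, b, c)\<leftarrow>T. - mtr (lbr (Eu (l a)) (Eu (l b)) ** Eu (l c))))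
      (kron (mprod (map (\<lambda>x. Eu (l x)) S1)) (mprod (map (\<lambda>x. Eu (l x)) S2)))"

lemma Wst_Gterm: "Wst (m, T, S1, S2, Ed) = (\<Sum>l\<in>PiE {0..<m} (\<lambda>_. UNIV). Gterm T S1 S2 Ed l)"
  unfolding Wst_sum Gterm_def ..

lemma prod_list_cong: "(\<And>x. x \<in> set xs \<Longrightarrow> f x = g x) \<Longrightarrow> prod_list (map f xs) = prod_list (map g xs)"
  by (metis map_cong)

lemma map_cong': "(\<And>x. x \<in> set xs \<Longrightarrow> f x = g x) \<Longrightarrow> map f xs = map g xs"
  by (metis map_cong)

lemma Gterm_stk:
  assumes w1: "wf_jdiag (m1, T1, S11, S12, E1)" and w2: "wf_jdiag (m2, T2, S21, S22, E2)"
    and l1: "\<And>x. x < m1 \<Longrightarrow> l x = l1 x" and l2: "\<And>x. x < m2 \<Longrightarrow> l (x + m1) = l2 x"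
  shows "(Gterm (T1 @ map (\<lambda>(a, b, c). (a + m1, b + m1, c + m1)) T2)
     (S11 @ map (\<lambda>x. x + m1) S21) (S12 @ map (\<lambda>x. x + m1) S22)
     (E1 @ map (\<lambda>(f, g). (f + m1, g + m1)) E2) l :: 'k::field^('n::finite\<times>'n)^('n\<times>'n))
   = Gterm T1 S11 S12 E1 l1 ** Gterm T2 S21 S22 E2 l2"
proof -
  from w1 have fe1: "set (eflags E1) = {0..<m1}" and fv1: "set (vflags T1) \<subseteq> {0..<m1}"
    and fs11: "set S11 \<subseteq> {0..<m1}" and fs12: "set S12 \<subseteq> {0..<m1}" by auto
  from w2 have fe2: "set (eflags E2) = {0..<m2}" and fv2: "set (vflags T2) \<subseteq> {0..<m2}"
    and fs21: "set S21 \<subseteq> {0..<m2}" and fs22: "set S22 \<subseteq> {0..<m2}" by auto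
  have e1: "(\<Prod>(f, g)\<leftarrow>E1. if l g = prod.swap (l f) then 1 else 0)
      = (\<Prod>(f, g)\<leftarrow>E1. if l1 g = prod.swap (l1 f) then 1 else (0::'k))"
  proof (rule prod_list_cong, clarify)
    fix f g assume "(f, g) \<in> set E1"
    then have "f < m1" "g < m1" using eflags_mem fe1 by fastforce+
    then show "(if l g = prod.swap (l f) then 1 else 0) = (if l1 g = prod.swap (l1 f) then 1 else (0::'k))"
      by (simp add: l1)
  qed
  have e2: "(\<Prod>(f, g)\<leftarrow>map (\<lambda>(f, g). (f + m1, g + m1)) E2. if l g = prod.swap (l f) then 1 else 0)
      = (\<Prod>(f, g)\<leftarrow>E2. if l2 g = prod.swap (l2 f) then 1 else (0::'k))"
    unfolding map_map
  proof (rule prod_list_cong, clarify)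
    fix f g assume "(f, g) \<in> set E2"
    then have "f < m2" "g < m2" using eflags_mem fe2 by fastforce+
    then show "((\<lambda>(f, g). if l g = prod.swap (l f) then 1 else 0) \<circ> (\<lambda>(f, g). (f + m1, g + m1))) (f, g)
       = (if l2 g = prod.swap (l2 f) then 1 else (0::'k))"
      by (simp add: l2)
  qed
  have v1: "(\<Prod>(a, b, c)\<leftarrow>T1. - mtr (lbr (Eu (l a)) (Eu (l b)) ** Eu (l c)))
      = (\<Prod>(a, b, c)\<leftarrow>T1. - mtr (lbr (Eu (l1 a)) (Eu (l1 b)) ** Eu (l1 c) :: 'k^'n^'n))"
  proof (rule prod_list_cong, clarify)
    fix a b c assume "(a, b, c) \<in> set T1"
    then have "a < m1" "b < m1" "c < m1" using vflags_mem fv1 by fastforce+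
    then show "- mtr (lbr (Eu (l a)) (Eu (l b)) ** Eu (l c)) = - mtr (lbr (Eu (l1 a)) (Eu (l1 b)) ** Eu (l1 c) :: 'k^'n^'n)"
      by (simp add: l1)
  qed
  have v2: "(\<Prod>(a, b, c)\<leftarrow>map (\<lambda>(a, b, c). (a + m1, b + m1, c + m1)) T2. - mtr (lbr (Eu (l a)) (Eu (l b)) ** Eu (l c)))
      = (\<Prod>(a, b, c)\<leftarrow>T2. - mtr (lbr (Eu (l2 a)) (Eu (l2 b)) ** Eu (l2 c) :: 'k^'n^'n))"
    unfolding map_map
  proof (rule prod_list_cong, clarify)
    fix a b c assume "(a, b, c) \<in> set T2"
    then have "a < m2" "b < m2" "c < m2" using vflags_mem fv2 by fastforce+
    then show "((\<lambda>(a, b, c). - mtr (lbr (Eu (l a)) (Eu (l b)) ** Eu (l c))) \<circ> (\<lambda>(a, b, c). (a + m1, b + m1, c + m1))) (a, b, c)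
       = - mtr (lbr (Eu (l2 a)) (Eu (l2 b)) ** Eu (l2 c) :: 'k^'n^'n)"
      by (simp add: l2)
  qed
  have m1: "map (\<lambda>x. Eu (l x)) S = map (\<lambda>x. Eu (l1 x)) S" if "set S \<subseteq> {0..<m1}" for S
    by (rule map_cong') (use that l1 in auto)
  have m2: "map (\<lambda>x. Eu (l x)) (map (\<lambda>x. x + m1) S) = map (\<lambda>x. Eu (l2 x)) S" if "set S \<subseteq> {0..<m2}" for S
    unfolding map_map by (rule map_cong') (use that l2 in auto)
  have ms: "mprod (map (\<lambda>x. Eu (l x)) (S @ map (\<lambda>x. x + m1) S'))
     = mprod (map (\<lambda>x. Eu (l1 x)) S) ** (mprod (map (\<lambda>x. Eu (l2 x)) S') :: 'k^'n^'n)"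
    if "set S \<subseteq> {0..<m1}" "set S' \<subseteq> {0..<m2}" for S S'
    by (simp only: map_append mprod_append m1[OF that(1)] m2[OF that(2)])
  show ?thesis
    unfolding Gterm_def smul_mmul kron_mmul
    unfolding ms[OF fs11 fs21] ms[OF fs12 fs22]
    unfolding prod_list.append map_append e1 e2 v1 v2
    by (simp add: mult_ac)
qed



definition merge :: "nat \<Rightarrow> nat \<Rightarrow> (nat \<Rightarrow> 'a) \<Rightarrow> (nat \<Rightarrow> 'a) \<Rightarrow> nat \<Rightarrow> 'a" where
  "merge m1 m2 l1 l2 = (\<lambda>x. if x < m1 then l1 x else if x < m1 + m2 then l2 (x - m1) else undefined)"

lemma merge_bij:
  "bij_betw (\<lambda>(l1, l2). merge m1 m2 l1 l2)
     (PiE {0..<m1} (\<lambda>_. UNIV) \<times> PiE {0..<m2} (\<lambda>_. UNIV)) (PiE {0..<m1 + m2} (\<lambda>_. UNIV))"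
proof (rule bij_betw_byWitness[where f'="\<lambda>l. (restrict l {0..<m1}, restrict (\<lambda>x. l (x + m1)) {0..<m2})"])
  show "\<forall>a\<in>({0..<m1} \<rightarrow>\<^sub>E UNIV) \<times> ({0..<m2} \<rightarrow>\<^sub>E UNIV).
       (restrict ((\<lambda>(l1, l2). merge m1 m2 l1 l2) a) {0..<m1},
        restrict (\<lambda>x. (\<lambda>(l1, l2). merge m1 m2 l1 l2) a (x + m1)) {0..<m2}) = a"
    by (auto simp: merge_def fun_eq_iff PiE_def extensional_def)
  show "\<forall>a'\<in>{0..<m1 + m2} \<rightarrow>\<^sub>E UNIV.
       (\<lambda>(l1, l2). merge m1 m2 l1 l2) (restrict a' {0..<m1}, restrict (\<lambda>x. a' (x + m1)) {0..<m2}) = a'"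
    by (auto simp: merge_def fun_eq_iff PiE_def extensional_def)
  show "(\<lambda>(l1, l2). merge m1 m2 l1 l2) ` (({0..<m1} \<rightarrow>\<^sub>E UNIV) \<times> ({0..<m2} \<rightarrow>\<^sub>E UNIV)) \<subseteq> {0..<m1 + m2} \<rightarrow>\<^sub>E UNIV"
    by (auto simp: merge_def PiE_def extensional_def)
  show "(\<lambda>l. (restrict l {0..<m1}, restrict (\<lambda>x. l (x + m1)) {0..<m2})) ` ({0..<m1 + m2} \<rightarrow>\<^sub>E UNIV)
    \<subseteq> ({0..<m1} \<rightarrow>\<^sub>E UNIV) \<times> ({0..<m2} \<rightarrow>\<^sub>E UNIV)"
    by auto
qed

lemma Wst_stk:
  assumes w1: "wf_jdiag (m1, T1, S11, S12, E1)" and w2: "wf_jdiag (m2, T2, S21, S22, E2)"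
  shows "(Wst (stk (m1, T1, S11, S12, E1) (m2, T2, S21, S22, E2)) :: 'k::field^('n::finite\<times>'n)^('n\<times>'n))
       = Wst (m1, T1, S11, S12, E1) ** Wst (m2, T2, S21, S22, E2)"
proof -
  let ?P1 = "PiE {0..<m1} (\<lambda>_. UNIV :: ('n \<times> 'n) set)"
  let ?P2 = "PiE {0..<m2} (\<lambda>_. UNIV :: ('n \<times> 'n) set)"
  let ?G = "Gterm (T1 @ map (\<lambda>(a, b, c). (a + m1, b + m1, c + m1)) T2)
     (S11 @ map (\<lambda>x. x + m1) S21) (S12 @ map (\<lambda>x. x + m1) S22)
     (E1 @ map (\<lambda>(f, g). (f + m1, g + m1)) E2) :: _ \<Rightarrow> 'k^('n\<times>'n)^('n\<times>'n)"
  have "Wst (stk (m1, T1, S11, S12, E1) (m2, T2, S21, S22, E2)) = (\<Sum>l\<in>PiE {0..<m1 + m2} (\<lambda>_. UNIV). ?G l)"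
    by (simp only: stk.simps Wst_Gterm)
  also have "\<dots> = (\<Sum>x\<in>?P1 \<times> ?P2. ?G ((\<lambda>(l1, l2). merge m1 m2 l1 l2) x))"
    using sum.reindex_bij_betw[OF merge_bij, of ?G m1 m2] by simp
  also have "\<dots> = (\<Sum>l1\<in>?P1. \<Sum>l2\<in>?P2. ?G (merge m1 m2 l1 l2))"
    by (simp add: sum.cartesian_product split_beta)
  also have "\<dots> = (\<Sum>l1\<in>?P1. \<Sum>l2\<in>?P2. Gterm T1 S11 S12 E1 l1 ** Gterm T2 S21 S22 E2 l2)"
    by (intro sum.cong refl Gterm_stk[OF w1 w2]) (auto simp: merge_def)
  also have "\<dots> = (\<Sum>l1\<in>?P1. Gterm T1 S11 S12 E1 l1) ** (\<Sum>l2\<in>?P2. Gterm T2 S21 S22 E2 l2)"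
    by (simp only: sum_mmul_left, simp only: sum_mmul_right)
  also have "\<dots> = Wst (m1, T1, S11, S12, E1) ** Wst (m2, T2, S21, S22, E2)"
    by (simp only: Wst_Gterm)
  finally show ?thesis .
qed



lemma Wst_stk': "wf_jdiag D1 \<Longrightarrow> wf_jdiag D2 \<Longrightarrow>
   (Wst (stk D1 D2) :: 'k::field^('n::finite\<times>'n)^('n\<times>'n)) = Wst D1 ** Wst D2"
  by (cases D1; cases D2) (simp only: Wst_stk)

lemma wf_stk': "wf_jdiag D1 \<Longrightarrow> wf_jdiag D2 \<Longrightarrow> wf_jdiag (stk D1 D2)"
  by (cases D1; cases D2) (simp only: wf_stk)

definition inS :: "'k::field^('n::finite\<times>'n)^('n\<times>'n) \<Rightarrow> bool" where
  "inS X \<longleftrightarrow> (\<forall>p q. X $ p $ q \<noteq> 0 \<longrightarrow> q = p \<or> q = prod.swap p) \<and>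
     (\<forall>p. X $ prod.swap p $ prod.swap p = X $ p $ p \<and> X $ prod.swap p $ p = X $ p $ prod.swap p)"

definition tr2 :: "'n \<Rightarrow> 'n \<Rightarrow> 'n \<Rightarrow> 'n" where
  "tr2 a b x = (if x = a then b else if x = b then a else x)"

lemma tr2_bij: "bij (tr2 a b)"
  by (rule o_bij[where g="tr2 a b"]) (auto simp: tr2_def fun_eq_iff)

lemma Wst_inS:
  assumes wf: "wf_jdiag D"
  shows "inS (Wst D :: 'k::field^('n::finite\<times>'n)^('n\<times>'n))"
proof -
  obtain m T S1 S2 Ed where D: "D = (m, T, S1, S2, Ed)" by (cases D)
  have 1: "\<forall>p q. (Wst D :: 'k^('n\<times>'n)^('n\<times>'n)) $ p $ q \<noteq> 0 \<longrightarrow> q = p \<or> q = prod.swap p"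
    using Wst_support wf unfolding D by blast
  have 2: "(Wst D :: 'k^('n\<times>'n)^('n\<times>'n)) $ prod.swap p $ prod.swap p = Wst D $ p $ p \<and>
      (Wst D :: 'k^('n\<times>'n)^('n\<times>'n)) $ prod.swap p $ p = Wst D $ p $ prod.swap p" for p
  proof -
    obtain a b where p: "p = (a, b)" by (cases p)
    have e1: "map_prod (tr2 a b) (tr2 a b) (a, b) = (b, a)" and e2: "map_prod (tr2 a b) (tr2 a b) (b, a) = (a, b)"
      by (auto simp: tr2_def)
    have h1: "(Wst (m, T, S1, S2, Ed) :: 'k^('n\<times>'n)^('n\<times>'n)) $ (b, a) $ (b, a) = Wst (m, T, S1, S2, Ed) $ (a, b) $ (a, b)"
      using Wst_perm[OF wf[unfolded D] tr2_bij[of a b], of "(a, b)" "(a, b)"] unfolding e1 .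
    have h2: "(Wst (m, T, S1, S2, Ed) :: 'k^('n\<times>'n)^('n\<times>'n)) $ (b, a) $ (a, b) = Wst (m, T, S1, S2, Ed) $ (a, b) $ (b, a)"
      using Wst_perm[OF wf[unfolded D] tr2_bij[of a b], of "(a, b)" "(b, a)"] unfolding e1 e2 .
    show ?thesis unfolding p D by (simp only: prod.swap_def fst_conv snd_conv h1 h2)
  qed
  show ?thesis unfolding inS_def using 1 2 by blast
qed

lemma inS_D1: "inS X \<Longrightarrow> X $ prod.swap p $ prod.swap p = X $ p $ p"
  unfolding inS_def by blast
lemma inS_D2: "inS X \<Longrightarrow> X $ prod.swap p $ p = X $ p $ prod.swap p"
  unfolding inS_def by blast
lemma inS_D3: "inS X \<Longrightarrow> q \<noteq> p \<Longrightarrow> q \<noteq> prod.swap p \<Longrightarrow> X $ p $ q = 0"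
  unfolding inS_def by blast

lemma inS_sum:
  assumes "\<And>D. D \<in> A \<Longrightarrow> inS (F D)"
  shows "inS (\<chi> p q. \<Sum>D\<in>A. c D * (F D :: 'k::field^('n::finite\<times>'n)^('n\<times>'n)) $ p $ q)"
proof -
  have 1: "q = p \<or> q = prod.swap p" if nz: "(\<Sum>D\<in>A. c D * F D $ p $ q) \<noteq> 0" for p q
  proof -
    from nz obtain D where D: "D \<in> A" "c D * F D $ p $ q \<noteq> 0"
      by (meson sum.not_neutral_contains_not_neutral)
    then have "F D $ p $ q \<noteq> 0" by auto
    then show ?thesis using assms[OF D(1)] unfolding inS_def by blast
  qed
  have 2: "(\<Sum>D\<in>A. c D * F D $ prod.swap p $ prod.swap p) = (\<Sum>D\<in>A. c D * F D $ p $ p)"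
      "(\<Sum>D\<in>A. c D * F D $ prod.swap p $ p) = (\<Sum>D\<in>A. c D * F D $ p $ prod.swap p)" for p
    by (intro sum.cong refl; simp add: inS_D1[OF assms] inS_D2[OF assms])+
  show ?thesis unfolding inS_def using 1 2 by simp
qed

lemma Wimage_inS:
  assumes "X \<in> Wimage"
  shows "inS (X :: 'k::field^('n::finite\<times>'n)^('n\<times>'n))"
proof -
  from assms obtain A c where A: "\<forall>D\<in>A. wf_jdiag D"
    and X: "X = (\<chi> p q. \<Sum>D\<in>A. c D * (Wst D :: 'k ^ ('n \<times> 'n) ^ ('n \<times> 'n)) $ p $ q)"
    unfolding Wimage_def by blast
  show ?thesis unfolding X by (rule inS_sum) (use A Wst_inS in blast)
qed


lemma inS_comm:
  assumes X: "inS X" and Y: "inS (Y :: 'k::field^('n::finite\<times>'n)^('n\<times>'n))"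
  shows "X ** Y = Y ** X"
proof -
  have Xs: "X $ p $ q = 0" if "q \<noteq> p" "q \<noteq> prod.swap p" for p q using X that unfolding inS_def by blast
  have Ys: "Y $ p $ q = 0" if "q \<noteq> p" "q \<noteq> prod.swap p" for p q using Y that unfolding inS_def by blast
  have X2: "X $ prod.swap p $ prod.swap p = X $ p $ p" "X $ prod.swap p $ p = X $ p $ prod.swap p" for p
    using X unfolding inS_def by blast+
  have Y2: "Y $ prod.swap p $ prod.swap p = Y $ p $ p" "Y $ prod.swap p $ p = Y $ p $ prod.swap p" for p
    using Y unfolding inS_def by blast+
  have red: "(\<Sum>r\<in>UNIV. A $ p $ r * B $ r $ q) = (\<Sum>r\<in>{p, prod.swap p}. A $ p $ r * B $ r $ q)"
    if "\<And>q. q \<noteq> p \<Longrightarrow> q \<noteq> prod.swap p \<Longrightarrow> A $ p $ q = 0" for A B :: "'k^('n\<times>'n)^('n\<times>'n)" and p q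
  proof -
    have h: "\<forall>r\<in>UNIV - {p, prod.swap p}. A $ p $ r * B $ r $ q = 0"
    proof
      fix r assume "r \<in> UNIV - {p, prod.swap p}"
      then have "A $ p $ r = 0" using that by blast
      then show "A $ p $ r * B $ r $ q = 0" by simp
    qed
    show ?thesis
      using sum.mono_neutral_right[of UNIV "{p, prod.swap p}" "\<lambda>r. A $ p $ r * B $ r $ q"] h by simp
  qed
  have "(X ** Y) $ p $ q = (Y ** X) $ p $ q" for p q
  proof -
    have L: "(X ** Y) $ p $ q = (\<Sum>r\<in>{p, prod.swap p}. X $ p $ r * Y $ r $ q)"
      unfolding matrix_matrix_mult_def vec_lambda_beta by (rule red) (rule Xs)
    have R: "(Y ** X) $ p $ q = (\<Sum>r\<in>{p, prod.swap p}. Y $ p $ r * X $ r $ q)"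
      unfolding matrix_matrix_mult_def vec_lambda_beta by (rule red) (rule Ys)
    show ?thesis
    proof (cases "prod.swap p = p")
      case True
      then show ?thesis unfolding L R
        by (cases "q = p") (auto simp: Xs Ys)
    next
      case False
      then have s: "(\<Sum>r\<in>{p, prod.swap p}. A $ p $ r * B $ r $ q) = A $ p $ p * B $ p $ q + A $ p $ prod.swap p * B $ prod.swap p $ q"
        for A B :: "'k^('n\<times>'n)^('n\<times>'n)" by (simp add: sum.insert_if)
      show ?thesis
      proof (cases "q = p")
        case True
        then show ?thesis unfolding L R s using X2[of p] Y2[of p] by (simp add: mult_ac)
      next
        case qp: False
        show ?thesis
        proof (cases "q = prod.swap p")
          case True
          then show ?thesis unfolding L R s using X2[of p] Y2[of p] by (simp add: mult_ac)
        next
          case False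
          have "Y $ prod.swap p $ q = 0" "X $ prod.swap p $ q = 0"
            using qp False by (auto intro!: Xs Ys)
          then show ?thesis unfolding L R s using qp False by (simp add: Xs Ys)
        qed
      qed
    qed
  qed
  then show ?thesis by (simp add: vec_eq_iff)
qed



lemma chi_sum: "(\<chi> p q. \<Sum>D\<in>A. c D * (M D :: 'k::field^('n::finite\<times>'n)^('n\<times>'n)) $ p $ q) = (\<Sum>D\<in>A. smul (c D) (M D))"
  by (simp add: vec_eq_iff)

lemma Wimage_alt: "(X :: 'k::field^('n::finite\<times>'n)^('n\<times>'n)) \<in> Wimage \<longleftrightarrow>
   (\<exists>A c. finite A \<and> (\<forall>D\<in>A. wf_jdiag D) \<and> X = (\<Sum>D\<in>A. smul (c D) (Wst D)))"
  unfolding Wimage_def chi_sum by simp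

lemma smul_add: "smul (a + b) M = smul a M + smul b M"
  by (simp add: vec_eq_iff distrib_right)

lemma smul_zero: "smul 0 M = 0"
  by (simp add: vec_eq_iff)

lemma smul_smul: "smul a (smul b M) = smul (a * b) M"
  by (simp add: vec_eq_iff)

lemma smul_sum: "smul a (sum f A) = (\<Sum>x\<in>A. smul a (f x))"
  by (simp add: vec_eq_iff sum_distrib_left)

lemma W_zero: "(0 :: 'k::field^('n::finite\<times>'n)^('n\<times>'n)) \<in> Wimage"
  unfolding Wimage_alt by (rule exI[of _ "{}"]) simp

lemma W_add:
  assumes "X \<in> Wimage" "(Y :: 'k::field^('n::finite\<times>'n)^('n\<times>'n)) \<in> Wimage"
  shows "X + Y \<in> Wimage"
proof -
  from assms(1)[unfolded Wimage_alt] obtain A1 c1 where A1X: "finite A1 \<and> (\<forall>D\<in>A1. wf_jdiag D) \<and> X = (\<Sum>D\<in>A1. smul (c1 D) (Wst D))"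
    by (elim exE) (erule that)
  then have A1: "finite A1" "\<forall>D\<in>A1. wf_jdiag D" and X: "X = (\<Sum>D\<in>A1. smul (c1 D) (Wst D))" by simp_all
  from assms(2)[unfolded Wimage_alt] obtain A2 c2 where A2Y: "finite A2 \<and> (\<forall>D\<in>A2. wf_jdiag D) \<and> Y = (\<Sum>D\<in>A2. smul (c2 D) (Wst D))"
    by (elim exE) (erule that)
  then have A2: "finite A2" "\<forall>D\<in>A2. wf_jdiag D" and Y: "Y = (\<Sum>D\<in>A2. smul (c2 D) (Wst D))" by simp_all
  define c where "c D = (if D \<in> A1 then c1 D else 0) + (if D \<in> A2 then c2 D else 0)" for D
  have fin: "finite (A1 \<union> A2)" using A1 A2 by simp
  have "(\<Sum>D\<in>A1 \<union> A2. smul (c D) (Wst D) :: 'k^('n\<times>'n)^('n\<times>'n))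
      = (\<Sum>D\<in>A1 \<union> A2. if D \<in> A1 then smul (c1 D) (Wst D) else 0)
      + (\<Sum>D\<in>A1 \<union> A2. if D \<in> A2 then smul (c2 D) (Wst D) else 0)"
    unfolding c_def smul_add sum.distrib[symmetric] by (intro sum.cong refl) (simp add: smul_zero)
  also have "\<dots> = X + Y"
    unfolding sum.inter_restrict[OF fin, symmetric] X Y by (simp add: Int_absorb1 Int_absorb2 Un_Int_eq)
  finally show ?thesis unfolding Wimage_alt using fin A1 A2 by (intro exI[of _ "A1 \<union> A2"] exI[of _ c]) (simp add: ball_Un)
qed

lemma W_smul:
  assumes "(X :: 'k::field^('n::finite\<times>'n)^('n\<times>'n)) \<in> Wimage"
  shows "smul a X \<in> Wimage"
proof -
  from assms[unfolded Wimage_alt] obtain A c where AX: "finite A \<and> (\<forall>D\<in>A. wf_jdiag D) \<and> X = (\<Sum>D\<in>A. smul (c D) (Wst D))"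
    by (elim exE) (erule that)
  then have A: "finite A" "\<forall>D\<in>A. wf_jdiag D" and X: "X = (\<Sum>D\<in>A. smul (c D) (Wst D))" by simp_all
  have "smul a X = (\<Sum>D\<in>A. smul (a * c D) (Wst D))"
    unfolding X smul_sum smul_smul ..
  then show ?thesis unfolding Wimage_alt using A by (intro exI[of _ A] exI[of _ "\<lambda>D. a * c D"]) simp
qed

lemma W_sum:
  assumes "finite B" "\<And>b. b \<in> B \<Longrightarrow> (f b :: 'k::field^('n::finite\<times>'n)^('n\<times>'n)) \<in> Wimage"
  shows "sum f B \<in> Wimage"
  using assms by (induction B rule: finite_induct) (simp_all add: W_zero W_add)

lemma W_gen:
  assumes "wf_jdiag D"
  shows "(Wst D :: 'k::field^('n::finite\<times>'n)^('n\<times>'n)) \<in> Wimage"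
proof -
  have "(Wst D :: 'k^('n\<times>'n)^('n\<times>'n)) = (\<Sum>D'\<in>{D}. smul 1 (Wst D'))"
    by (simp add: vec_eq_iff)
  then show ?thesis unfolding Wimage_alt using assms by (intro exI[of _ "{D}"] exI[of _ "\<lambda>_. 1"]) simp
qed

lemma W_one: "(mat 1 :: 'k::field^('n::finite\<times>'n)^('n\<times>'n)) \<in> Wimage"
proof -
  have wf: "wf_jdiag (0, [], [], [], [])" by (simp add: vflags_def eflags_def)
  have eq: "(Wst (0, [], [], [], []) :: 'k^('n\<times>'n)^('n\<times>'n)) = mat 1"
    by (simp add: vec_eq_iff kron_def mprod_Nil mat_def prod_eq_iff)
  have "(Wst (0, [], [], [], []) :: 'k^('n\<times>'n)^('n\<times>'n)) \<in> Wimage" by (rule W_gen[OF wf])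
  then show ?thesis unfolding eq .
qed

lemma W_mul:
  assumes "X \<in> Wimage" "(Y :: 'k::field^('n::finite\<times>'n)^('n\<times>'n)) \<in> Wimage"
  shows "X ** Y \<in> Wimage"
proof -
  from assms(1)[unfolded Wimage_alt] obtain A1 c1 where A1X: "finite A1 \<and> (\<forall>D\<in>A1. wf_jdiag D) \<and> X = (\<Sum>D\<in>A1. smul (c1 D) (Wst D))"
    by (elim exE) (erule that)
  then have A1: "finite A1" "\<forall>D\<in>A1. wf_jdiag D" and X: "X = (\<Sum>D\<in>A1. smul (c1 D) (Wst D))" by simp_all
  from assms(2)[unfolded Wimage_alt] obtain A2 c2 where A2Y: "finite A2 \<and> (\<forall>D\<in>A2. wf_jdiag D) \<and> Y = (\<Sum>D\<in>A2. smul (c2 D) (Wst D))"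
    by (elim exE) (erule that)
  then have A2: "finite A2" "\<forall>D\<in>A2. wf_jdiag D" and Y: "Y = (\<Sum>D\<in>A2. smul (c2 D) (Wst D))" by simp_all
  have "X ** Y = (\<Sum>D\<in>A1. \<Sum>D'\<in>A2. smul (c1 D) (Wst D) ** smul (c2 D') (Wst D'))"
    unfolding X Y by (simp only: sum_mmul_left, simp only: sum_mmul_right)
  also have "\<dots> \<in> Wimage"
  proof (rule W_sum[OF A1(1), of "\<lambda>D. \<Sum>D'\<in>A2. smul (c1 D) (Wst D) ** smul (c2 D') (Wst D')"])
    fix D assume D: "D \<in> A1"
    show "(\<Sum>D'\<in>A2. smul (c1 D) (Wst D) ** smul (c2 D') (Wst D')) \<in> (Wimage :: ('k^('n\<times>'n)^('n\<times>'n)) set)"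
    proof (rule W_sum[OF A2(1), of "\<lambda>D'. smul (c1 D) (Wst D) ** smul (c2 D') (Wst D')"])
      fix D' assume "D' \<in> A2"
      then have w: "wf_jdiag D" "wf_jdiag D'" using A1 A2 D by auto
      have "(Wst (stk D D') :: 'k^('n\<times>'n)^('n\<times>'n)) \<in> Wimage" by (rule W_gen, rule wf_stk'[OF w])
      then have "smul (c1 D * c2 D') (Wst (stk D D') :: 'k^('n\<times>'n)^('n\<times>'n)) \<in> Wimage" by (rule W_smul)
      then show "smul (c1 D) (Wst D) ** smul (c2 D') (Wst D') \<in> (Wimage :: ('k^('n\<times>'n)^('n\<times>'n)) set)"
        by (simp only: smul_mmul Wst_stk'[OF w])
    qed
  qed
  finally show ?thesis .
qed

theorem corollary5p2:
  fixes W :: "('k::field_char_0 ^ ('n::finite \<times> 'n) ^ ('n \<times> 'n)) set"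
  assumes "W = Wimage"
  shows "mat 1 \<in> W \<and>
         (\<forall>X\<in>W. \<forall>Y\<in>W. X + Y \<in> W) \<and>
         (\<forall>c::'k. \<forall>X\<in>W. (\<chi> p q. c * X $ p $ q) \<in> W) \<and>
         (\<forall>X\<in>W. \<forall>Y\<in>W. X ** Y \<in> W) \<and>
         (\<forall>X\<in>W. \<forall>Y\<in>W. X ** Y = Y ** X)"
  unfolding assms
proof (intro conjI ballI allI)
  show "mat 1 \<in> (Wimage :: ('k ^ ('n \<times> 'n) ^ ('n \<times> 'n)) set)" by (rule W_one)
next
  fix X Y :: "'k ^ ('n \<times> 'n) ^ ('n \<times> 'n)"
  assume "X \<in> Wimage" "Y \<in> Wimage"
  then show "X + Y \<in> Wimage" by (rule W_add)
next
  fix c :: 'k and X :: "'k ^ ('n \<times> 'n) ^ ('n \<times> 'n)"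
  assume "X \<in> Wimage"
  then show "(\<chi> p q. c * X $ p $ q) \<in> Wimage" using W_smul[of X c] unfolding smul_def by simp
next
  fix X Y :: "'k ^ ('n \<times> 'n) ^ ('n \<times> 'n)"
  assume "X \<in> Wimage" "Y \<in> Wimage"
  then show "X ** Y \<in> Wimage" by (rule W_mul)
next
  fix X Y :: "'k ^ ('n \<times> 'n) ^ ('n \<times> 'n)"
  assume "X \<in> Wimage" "Y \<in> Wimage"
  then show "X ** Y = Y ** X" by (intro inS_comm Wimage_inS)
qed


end
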